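(* Let $G$ be a graph, let $R$ be a general position set of $G$, and let $v\in R$. Then $|R|\le \mathrm{ip}(v,G)+1$. In particular, if $v$ is a gp-vertex of $G$, then $\mathrm{gp}(G)\le \mathrm{ip}(v,G)+1$.
   Context: All graphs are finite, simple and connected. A geodesic is a shortest path. A set $S$ of vertices is a general position set of $G$ if no three vertices of $S$ lie on a common geodesic of $G$; $\mathrm{gp}(G)$ is the maximum cardinality of a general position set, and a general position set of that cardinality is a gp-set. A gp-vertex of $G$ is a vertex lying in at least one gp-set of $G$. For $v\in V(G)$, $\mathrm{ip}(v,G)$ is the minimum number of geodesics of $G$, each having $v$ as an end-vertex, whose vertex sets together cover $V(G)$. *)

theory Defs
  imports Main
begin

definition walk :: "('a \<Rightarrow> 'a \<Rightarrow> bool) \<Rightarrow> 'a set \<Rightarrow> 'a list \<Rightarrow> bool" where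
  "walk E V p \<longleftrightarrow> p \<noteq> [] \<and> set p \<subseteq> V \<and> (\<forall>i. Suc i < length p \<longrightarrow> E (p ! i) (p ! Suc i))"

definition graph :: "'a set \<Rightarrow> ('a \<Rightarrow> 'a \<Rightarrow> bool) \<Rightarrow> bool" where
  "graph V E \<longleftrightarrow> finite V \<and> V \<noteq> {} \<and>
     (\<forall>x y. E x y \<longrightarrow> x \<in> V \<and> y \<in> V) \<and>
     (\<forall>x y. E x y \<longrightarrow> E y x) \<and> (\<forall>x. \<not> E x x) \<and>
     (\<forall>x\<in>V. \<forall>y\<in>V. \<exists>p. walk E V p \<and> hd p = x \<and> last p = y)"

definition dist :: "'a set \<Rightarrow> ('a \<Rightarrow> 'a \<Rightarrow> bool) \<Rightarrow> 'a \<Rightarrow> 'a \<Rightarrow> nat" where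
  "dist V E u v = (LEAST n. \<exists>p. walk E V p \<and> hd p = u \<and> last p = v \<and> length p = Suc n)"

definition geodesic :: "'a set \<Rightarrow> ('a \<Rightarrow> 'a \<Rightarrow> bool) \<Rightarrow> 'a list \<Rightarrow> bool" where
  "geodesic V E p \<longleftrightarrow> walk E V p \<and> length p = Suc (dist V E (hd p) (last p))"

definition gp_set :: "'a set \<Rightarrow> ('a \<Rightarrow> 'a \<Rightarrow> bool) \<Rightarrow> 'a set \<Rightarrow> bool" where
  "gp_set V E S \<longleftrightarrow> S \<subseteq> V \<and>
     \<not> (\<exists>x\<in>S. \<exists>y\<in>S. \<exists>z\<in>S. x \<noteq> y \<and> y \<noteq> z \<and> x \<noteq> z \<and>
           (\<exists>p. geodesic V E p \<and> x \<in> set p \<and> y \<in> set p \<and> z \<in> set p))"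

definition gp :: "'a set \<Rightarrow> ('a \<Rightarrow> 'a \<Rightarrow> bool) \<Rightarrow> nat" where
  "gp V E = Max {card S | S. gp_set V E S}"

definition is_gp_set :: "'a set \<Rightarrow> ('a \<Rightarrow> 'a \<Rightarrow> bool) \<Rightarrow> 'a set \<Rightarrow> bool" where
  "is_gp_set V E S \<longleftrightarrow> gp_set V E S \<and> card S = gp V E"

definition gp_vertex :: "'a set \<Rightarrow> ('a \<Rightarrow> 'a \<Rightarrow> bool) \<Rightarrow> 'a \<Rightarrow> bool" where
  "gp_vertex V E v \<longleftrightarrow> (\<exists>S. is_gp_set V E S \<and> v \<in> S)"

definition ip :: "'a set \<Rightarrow> ('a \<Rightarrow> 'a \<Rightarrow> bool) \<Rightarrow> 'a \<Rightarrow> nat" where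
  "ip V E v = (LEAST k. \<exists>Ps. finite Ps \<and> card Ps = k \<and>
      (\<forall>p\<in>Ps. geodesic V E p \<and> (hd p = v \<or> last p = v)) \<and>
      V \<subseteq> (\<Union>p\<in>Ps. set p))"

end

theory Submission
  imports Defs
begin

lemma geo_exists:
  assumes "graph V E" "x \<in> V" "y \<in> V"
  shows "\<exists>p. geodesic V E p \<and> hd p = x \<and> last p = y"
proof -
  obtain q where q: "walk E V q" "hd q = x" "last q = y"
    using assms unfolding graph_def by blast
  have ex: "\<exists>n. \<exists>p. walk E V p \<and> hd p = x \<and> last p = y \<and> length p = Suc n"
    using q by (metis Suc_pred length_greater_0_conv walk_def)
  from LeastI_ex[OF ex] obtain p where
    "walk E V p" "hd p = x" "last p = y" "length p = Suc (dist V E x y)"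
    unfolding dist_def by blast
  thus ?thesis unfolding geodesic_def by auto
qed

lemma part1:
  assumes g: "graph V E" and R: "gp_set V E R" and vR: "v \<in> R"
  shows "card R \<le> ip V E v + 1"
proof -
  have RV: "R \<subseteq> V" using R unfolding gp_set_def by blast
  have fin: "finite V" using g unfolding graph_def by blast
  have vV: "v \<in> V" using RV vR by blast
  define pick where "pick u = (SOME p. geodesic V E p \<and> hd p = v \<and> last p = u)" for u
  have pk: "geodesic V E (pick u) \<and> hd (pick u) = v \<and> last (pick u) = u" if "u \<in> V" for u
    unfolding pick_def by (rule someI_ex, rule geo_exists[OF g vV that])
  have ex: "\<exists>k Ps. finite Ps \<and> card Ps = k \<and>
      (\<forall>p\<in>Ps. geodesic V E p \<and> (hd p = v \<or> last p = v)) \<and>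
      V \<subseteq> (\<Union>p\<in>Ps. set p)"
  proof (intro exI conjI)
    show "finite (pick ` V)" using fin by simp
    show "\<forall>p\<in>pick ` V. geodesic V E p \<and> (hd p = v \<or> last p = v)" using pk by auto
    show "V \<subseteq> (\<Union>p\<in>pick ` V. set p)"
    proof
      fix u assume u: "u \<in> V"
      have "pick u \<noteq> []" using pk[OF u] unfolding geodesic_def walk_def by blast
      hence "u \<in> set (pick u)" using pk[OF u] by (metis last_in_set)
      thus "u \<in> (\<Union>p\<in>pick ` V. set p)" using u by blast
    qed
  qed simp
  from LeastI_ex[OF ex] obtain Ps where Ps: "finite Ps" "card Ps = ip V E v"
    "\<forall>p\<in>Ps. geodesic V E p \<and> (hd p = v \<or> last p = v)" "V \<subseteq> (\<Union>p\<in>Ps. set p)"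
    unfolding ip_def by blast
  define f where "f x = (SOME p. p \<in> Ps \<and> x \<in> set p)" for x
  have fx: "f x \<in> Ps \<and> x \<in> set (f x)" if "x \<in> R" for x
    unfolding f_def by (rule someI_ex) (use that RV Ps(4) in blast)
  have vin: "v \<in> set p" if "p \<in> Ps" for p
  proof -
    have "p \<noteq> []" using Ps(3) that unfolding geodesic_def walk_def by blast
    thus ?thesis using Ps(3) that by (metis hd_in_set last_in_set)
  qed
  have inj: "inj_on f (R - {v})"
  proof (rule inj_onI, rule ccontr)
    fix x y assume x: "x \<in> R - {v}" and y: "y \<in> R - {v}" and e: "f x = f y" and n: "x \<noteq> y"
    let ?p = "f x"
    have "?p \<in> Ps" "x \<in> set ?p" using fx x by auto
    moreover have "y \<in> set ?p" using fx[of y] y e by auto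
    moreover have "v \<in> set ?p" using vin calculation by blast
    moreover have "geodesic V E ?p" using Ps(3) calculation by blast
    ultimately show False using R x y n vR unfolding gp_set_def by blast
  qed
  have "card (R - {v}) \<le> card Ps"
    by (rule card_inj_on_le[OF inj]) (use fx Ps(1) in auto)
  moreover have "finite R" using RV fin finite_subset by blast
  ultimately show ?thesis using Ps(2) vR by (simp add: card_Diff_singleton)
qed

theorem theorem3p3:
  fixes V :: "'a set" and E :: "'a \<Rightarrow> 'a \<Rightarrow> bool" and R :: "'a set" and v :: 'a
  assumes "graph V E"
  shows "(gp_set V E R \<and> v \<in> R \<longrightarrow> card R \<le> ip V E v + 1)
       \<and> (gp_vertex V E v \<longrightarrow> gp V E \<le> ip V E v + 1)"
  using part1[OF assms] unfolding gp_vertex_def is_gp_set_def by metis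

end
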